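(* Let $h,k$ be positive integers with $\gcd(h,k)=1$ and $h+k$ odd. Then $$Y_{1}(h,k)+Y_{1}(k,h)=2(k-1)B_{1}(h,k)+2(h-1)B_{1}(k,h).$$
   Context: $[x]$ denotes the greatest integer $\le x$. For coprime positive integers $a,b$ define $$B_{1}(a,b)=\sum_{j=1}^{b-1}(-1)^{j+\left[\frac{aj}{b}\right]}\left[\frac{aj}{b}\right],\qquad Y_{1}(a,b)=\sum_{j=1}^{b-1}(2j-1)(-1)^{j+\left[\frac{aj}{b}\right]}\left[\frac{aj}{b}\right].$$ *)

theory Defs
  imports Main
begin

text \<open>For positive integers a, b: floor(a*j/b) = (a*j) div b.\<close>

definition B1 :: "int \<Rightarrow> int \<Rightarrow> int" where
  "B1 a b = (\<Sum>j\<in>{1..b-1}. (-1) ^ nat (j + (a*j) div b) * ((a*j) div b))"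

definition Y1 :: "int \<Rightarrow> int \<Rightarrow> int" where
  "Y1 a b = (\<Sum>j\<in>{1..b-1}. (2*j - 1) * (-1) ^ nat (j + (a*j) div b) * ((a*j) div b))"

end

theory Submission
  imports Defs
begin

definition p :: "int \<Rightarrow> int" where "p a = (if even a then 1 else -1)"

lemma p_add: "p (a + b) = p a * p b"
  unfolding p_def by auto

lemma pow_p: "a \<ge> 0 \<Longrightarrow> (-1::int) ^ nat a = p a"
  unfolding p_def by (simp add: minus_one_power_iff even_nat_iff)

lemma alt_sum_nat: "p (int n) * int n = (\<Sum>m\<in>{1..int n}. p m * (2*m - 1))"
proof (induction n)
  case 0
  then show ?case by simp
next
  case (Suc n)
  have "{1..int (Suc n)} = insert (int n + 1) {1..int n}" by auto
  then have "(\<Sum>m\<in>{1..int (Suc n)}. p m * (2*m - 1)) = p (int n + 1) * (2 * (int n + 1) - 1) + (\<Sum>m\<in>{1..int n}. p m * (2*m - 1))"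
    by simp
  also have "\<dots> = p (int n + 1) * (2 * (int n + 1) - 1) + p (int n) * int n" using Suc by simp
  also have "\<dots> = p (int (Suc n)) * int (Suc n)"
    by (simp add: p_add) (simp add: p_def algebra_simps)
  finally show ?case by simp
qed

lemma alt_sum: "f \<ge> 0 \<Longrightarrow> p f * f = (\<Sum>m\<in>{1..f}. p m * (2*m - 1))"
  using alt_sum_nat[of "nat f"] by simp

definition T :: "int \<Rightarrow> int \<Rightarrow> int" where
  "T a b = (\<Sum>j\<in>{1..b-1}. (2*j - 2*b + 1) * p (j + (a*j) div b) * ((a*j) div b))"

lemma YB_T:
  assumes "a > 0" "b > 0"
  shows "Y1 a b - 2*(b-1)*B1 a b = T a b"
proof -
  have "Y1 a b - 2*(b-1)*B1 a b = (\<Sum>j\<in>{1..b-1}. (2*j - 1) * (-1) ^ nat (j + (a*j) div b) * ((a*j) div b)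
     - 2*(b-1) * ((-1) ^ nat (j + (a*j) div b) * ((a*j) div b)))"
    unfolding Y1_def B1_def by (simp add: sum_subtractf sum_distrib_left)
  also have "\<dots> = T a b"
    unfolding T_def
  proof (rule sum.cong)
    fix j assume "j \<in> {1..b-1}"
    then have "j + (a*j) div b \<ge> 0" using assms by (simp add: pos_imp_zdiv_nonneg_iff)
    then show "(2*j - 1) * (-1) ^ nat (j + (a*j) div b) * ((a*j) div b)
     - 2*(b-1) * ((-1) ^ nat (j + (a*j) div b) * ((a*j) div b)) =
      (2*j - 2*b + 1) * p (j + (a*j) div b) * ((a*j) div b)"
      by (simp add: pow_p algebra_simps)
  qed simp
  finally show ?thesis .
qed

lemma T_double:
  assumes "a > 0" "b > 0"
  shows "T a b = (\<Sum>j\<in>{1..b-1}. \<Sum>m\<in>{1..a-1}.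
     (if m*b \<le> a*j then p (j+m) * (2*m-1) * (2*j - 2*b + 1) else 0))"
  unfolding T_def
proof (rule sum.cong)
  fix j assume j: "j \<in> {1..b-1}"
  define f where "f = (a*j) div b"
  have f0: "f \<ge> 0" using assms j by (simp add: f_def pos_imp_zdiv_nonneg_iff)
  have "a*j < a*b" using j assms by (simp add: mult_strict_left_mono)
  have fb: "f*b \<le> a*j"
  proof -
    have "a*j = f*b + (a*j) mod b" unfolding f_def by simp
    moreover have "(a*j) mod b \<ge> 0" using assms by simp
    ultimately show ?thesis by linarith
  qed
  have fa: "f \<le> a - 1"
  proof -
    have "f*b < a*b" using fb \<open>a*j < a*b\<close> by linarith
    then have "f < a" using assms by (simp add: mult_less_cancel_right)
    then show ?thesis by simp
  qed
  have set: "{m\<in>{1..a-1}. m*b \<le> a*j} = {1..f}"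
  proof -
    have "\<And>m. m*b \<le> a*j \<longleftrightarrow> m \<le> f"
    proof
      fix m assume "m*b \<le> a*j"
      then have "(m*b) div b \<le> (a*j) div b" using assms(2) by (rule zdiv_mono1)
      then show "m \<le> f" using assms unfolding f_def by simp
    next
      fix m assume "m \<le> f"
      then have "m*b \<le> f*b" using assms by (simp add: mult_right_mono)
      then show "m*b \<le> a*j" using fb by linarith
    qed
    note iff = this
    show ?thesis
    proof (rule set_eqI)
      fix m
      have "((1 \<le> m \<and> m \<le> a-1) \<and> m \<le> f) \<longleftrightarrow> (1 \<le> m \<and> m \<le> f)" using fa by presburger
      then show "m \<in> {m\<in>{1..a-1}. m*b \<le> a*j} \<longleftrightarrow> m \<in> {1..f}"
        by (simp only: mem_Collect_eq atLeastAtMost_iff iff)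
    qed
  qed
  have "(\<Sum>m\<in>{1..a-1}. (if m*b \<le> a*j then p (j+m) * (2*m-1) * (2*j - 2*b + 1) else 0))
      = (\<Sum>m\<in>{m\<in>{1..a-1}. m*b \<le> a*j}. p (j+m) * (2*m-1) * (2*j - 2*b + 1))"
    by (rule sym, rule sum.inter_filter) simp
  also have "\<dots> = (\<Sum>m\<in>{1..f}. p (j+m) * (2*m-1) * (2*j - 2*b + 1))" using set by simp
  also have "\<dots> = p j * (2*j - 2*b + 1) * (\<Sum>m\<in>{1..f}. p m * (2*m-1))"
  proof -
    have "(\<Sum>m\<in>{1..f}. p (j+m) * (2*m-1) * (2*j - 2*b + 1)) = (\<Sum>m\<in>{1..f}. p j * (2*j - 2*b + 1) * (p m * (2*m-1)))"
      by (rule sum.cong) (simp_all add: p_add mult_ac)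
    also have "\<dots> = p j * (2*j - 2*b + 1) * (\<Sum>m\<in>{1..f}. p m * (2*m-1))"
      by (simp only: sum_distrib_left)
    finally show ?thesis .
  qed
  also have "\<dots> = (2*j - 2*b + 1) * p (j + f) * f"
    by (simp only: alt_sum[OF f0, symmetric]) (simp add: p_add mult_ac)
  finally show "(2*j - 2*b + 1) * p (j + (a*j) div b) * ((a*j) div b) =
     (\<Sum>m\<in>{1..a-1}. (if m*b \<le> a*j then p (j+m) * (2*m-1) * (2*j - 2*b + 1) else 0))"
    unfolding f_def by simp
qed simp

lemma no_eq:
  fixes h k j m :: int
  assumes "coprime h k" "1 \<le> j" "j \<le> k - 1"
  shows "m*k \<noteq> h*j"
proof
  assume "m*k = h*j"
  then have d: "k dvd h*j" by (metis dvd_triv_right)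
  have c: "coprime k h" using assms(1) by (rule coprime_commute[THEN iffD1])
  have "k dvd j" using d coprime_dvd_mult_right_iff[OF c, of j] by simp
  moreover have "0 < j" using assms(2) by simp
  ultimately have "k \<le> j" by (rule zdvd_imp_le)
  then show False using assms(3) by simp
qed

theorem theorem16:
  fixes h k :: int
  assumes "h > 0" and "k > 0" and "coprime h k" and "odd (h + k)"
  shows "Y1 h k + Y1 k h = 2*(k-1)*B1 h k + 2*(h-1)*B1 k h"
proof -
  define F where "F = (\<lambda>(j,m). (if m*k \<le> h*j then p (j+m) * (2*m-1) * (2*j - 2*k + 1) else 0)
     + (if j*h \<le> k*m then p (m+j) * (2*j-1) * (2*m - 2*h + 1) else 0))"
  define R where "R = {1..k-1} \<times> {1..h-1}"
  have Tk: "T k h = (\<Sum>j\<in>{1..k-1}. \<Sum>m\<in>{1..h-1}.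
     (if j*h \<le> k*m then p (m+j) * (2*j-1) * (2*m - 2*h + 1) else 0))"
    using T_double[of k h] assms by (simp add: sum.swap[where B="{1..k-1}"])
  have sumF: "T h k + T k h = sum F R"
    unfolding T_double[OF assms(1,2)] Tk R_def F_def
    by (simp add: sum.cartesian_product[symmetric] sum.distrib)
  define r where "r = (\<lambda>(j::int,m::int). (k-j, h-m))"
  have anti: "F (r x) = - F x" if "x \<in> R" for x
  proof -
    obtain j m where x: "x = (j,m)" by fastforce
    have j: "1 \<le> j" "j \<le> k-1" and m: "1 \<le> m" "m \<le> h-1" using that x R_def by auto
    have ne: "m*k \<noteq> h*j" using no_eq[OF assms(3) j] .
    have c1: "(h-m)*k \<le> h*(k-j) \<longleftrightarrow> h*j \<le> m*k" by (simp add: algebra_simps)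
    have c2: "(k-j)*h \<le> k*(h-m) \<longleftrightarrow> m*k \<le> h*j" by (simp add: algebra_simps)
    have e1: "even (k - j + (h - m)) \<longleftrightarrow> odd (j + m)" using assms(4) by presburger
    have e2: "even (h - m + (k - j)) \<longleftrightarrow> odd (j + m)" using assms(4) by presburger
    have pp: "p (k - j + (h - m)) = - p (j + m)" "p (h - m + (k - j)) = - p (j + m)"
      "p (m + j) = p (j + m)"
      unfolding p_def using e1 e2 by (auto simp: add.commute)
    have rx: "r x = (k-j, h-m)" unfolding x r_def by simp
    have Fr: "F (r x) = (if (h-m)*k \<le> h*(k-j) then p (k-j+(h-m)) * (2*(h-m)-1) * (2*(k-j) - 2*k + 1) else 0)
     + (if (k-j)*h \<le> k*(h-m) then p (h-m+(k-j)) * (2*(k-j)-1) * (2*(h-m) - 2*h + 1) else 0)"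
      unfolding rx F_def by simp
    have Fx: "F x = (if m*k \<le> h*j then p (j+m) * (2*m-1) * (2*j - 2*k + 1) else 0)
     + (if j*h \<le> k*m then p (m+j) * (2*j-1) * (2*m - 2*h + 1) else 0)"
      unfolding x F_def by simp
    show ?thesis
    proof (cases "m*k < h*j")
      case True
      then have a1: "\<not> (h-m)*k \<le> h*(k-j)" "(k-j)*h \<le> k*(h-m)" "m*k \<le> h*j" "\<not> j*h \<le> k*m"
        using c1 c2 by (auto simp: mult.commute)
      have "F (r x) = p (h-m+(k-j)) * (2*(k-j)-1) * (2*(h-m) - 2*h + 1)"
        unfolding Fr using a1 by simp
      moreover have "F x = p (j+m) * (2*m-1) * (2*j - 2*k + 1)" unfolding Fx using a1 by simp
      ultimately show ?thesis using pp by (simp add: algebra_simps)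
    next
      case False
      then have "h*j < m*k" using ne by simp
      then have a1: "(h-m)*k \<le> h*(k-j)" "\<not> (k-j)*h \<le> k*(h-m)" "\<not> m*k \<le> h*j" "j*h \<le> k*m"
        using c1 c2 by (auto simp: mult.commute)
      have "F (r x) = p (k-j+(h-m)) * (2*(h-m)-1) * (2*(k-j) - 2*k + 1)"
        unfolding Fr using a1 by simp
      moreover have "F x = p (m+j) * (2*j-1) * (2*m - 2*h + 1)" unfolding Fx using a1 by simp
      ultimately show ?thesis using pp by (simp add: algebra_simps)
    qed
  qed
  have "sum F R = sum (F \<circ> r) R"
    by (rule sum.reindex_bij_witness[where i=r and j=r]) (auto simp: r_def R_def)
  also have "\<dots> = - sum F R" using anti by (simp add: sum_negf[symmetric])
  finally have "sum F R = 0" by linarith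
  then have "T h k + T k h = 0" using sumF by linarith
  moreover have "Y1 h k - 2*(k-1)*B1 h k = T h k" using YB_T assms(1,2) by blast
  moreover have "Y1 k h - 2*(h-1)*B1 k h = T k h" using YB_T assms(1,2) by blast
  ultimately show ?thesis by linarith
qed

end
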